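(* In the modified multi-phase process described in the context, every element $x\in S^-_{1/6}$ that is considered by the process passes the preliminary test and all the following $\eta$ tests with probability at least $1-\frac{5}{n^2}$.
   Context: Let $n\ge2$ be an integer such that $m=n/\log_2 n$ is an integer, and let $S'$ be a set of $m$ distinct elements of a totally ordered set. For $\rho\in(0,1]$, $S^-_\rho$ denotes the set of the $\lceil \rho m\rceil$ smallest elements of $S'$ and $S^+_\rho=S'\setminus S^-_\rho$. There are two oracles $\mathcal{O}_1,\mathcal{O}_2$ which can be queried with an element $x\in S'$ and answer "relevant" or "not relevant" in constant time, all answers being mutually independent; for constants $p_1,p_2\in[0,\tfrac12)$: $\mathcal{O}_1$ reports $x$ relevant with probability at least $1-p_1$ if $x\in S^-_{1/6}$ and at most $p_1$ if $x\in S^+_{1/3}$; $\mathcal{O}_2$ reports $x$ relevant with probability at least $1-p_2$ if $x\in S^-_{1/3}$ and at most $p_2$ if $x\in S^+_{3/4}$. For $q\in[0,\tfrac12)$ let $c_q=\lceil 4(1-q)/(1-2q)^2\rceil$. Let $\eta = 1+\lceil \log_2 \frac{n}{\log_2 n}\rceil$. Modified multi-phase process: the elements of $S'$ are considered one at a time. For the current element $x$, a preliminary test is performed consisting of $8c_{p_1}\lceil \ln n\rceil+1$ queries to $\mathcal{O}_1$ on $x$; it is passed if the majority report $x$ relevant, otherwise $x$ is discarded and the next element is considered. Then, for $i=1,\dots,\eta$, the $i$-th test consists of $2\lceil 2^i\ln n\rceil c_{p_2}+1$ queries to $\mathcal{O}_2$ on $x$ and is passed if the majority report $x$ relevant; if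 $x$ fails a test it is discarded and the next element is considered. The process returns the first element that passes the $\eta$-th test. Here $\ln$ is the natural logarithm. *)

theory Defs
  imports "HOL-Probability.Probability"
begin

(* S^-_rho: the ceil(rho * |S|) smallest elements of the finite set S *)
definition S_minus :: "real \<Rightarrow> 'a::linorder set \<Rightarrow> 'a set" where
  "S_minus \<rho> S = {y \<in> S. real (card {z \<in> S. z < y}) < of_int \<lceil>\<rho> * real (card S)\<rceil>}"

definition cq :: "real \<Rightarrow> nat" where
  "cq q = nat \<lceil>4 * (1 - q) / (1 - 2 * q)^2\<rceil>"

definition eta :: "nat \<Rightarrow> nat" where
  "eta n = 1 + nat \<lceil>log 2 (real n / log 2 (real n))\<rceil>"

(* number of queries of test j: j = 0 is the preliminary test (oracle O1),
   j = 1..eta are the subsequent tests (oracle O2) *)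
definition num_queries :: "nat \<Rightarrow> real \<Rightarrow> real \<Rightarrow> nat \<Rightarrow> nat" where
  "num_queries n p1 p2 j =
     (if j = 0 then 8 * cq p1 * nat \<lceil>ln (real n)\<rceil> + 1
      else 2 * nat \<lceil>2 ^ j * ln (real n)\<rceil> * cq p2 + 1)"

definition query_set :: "nat \<Rightarrow> real \<Rightarrow> real \<Rightarrow> (nat \<times> nat) set" where
  "query_set n p1 p2 = {(j, t). j \<le> eta n \<and> t < num_queries n p1 p2 j}"

(* joint distribution of all (mutually independent) oracle answers on x;
   True = "relevant". Test 0 queries O1 (relevance prob. a1), the others O2 (prob. a2). *)
definition answers :: "nat \<Rightarrow> real \<Rightarrow> real \<Rightarrow> real \<Rightarrow> real \<Rightarrow> (nat \<times> nat \<Rightarrow> bool) pmf" where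
  "answers n p1 p2 a1 a2 =
     Pi_pmf (query_set n p1 p2) False
       (\<lambda>(j, t). bernoulli_pmf (if j = 0 then a1 else a2))"

definition passes_test :: "nat \<Rightarrow> real \<Rightarrow> real \<Rightarrow> (nat \<times> nat \<Rightarrow> bool) \<Rightarrow> nat \<Rightarrow> bool" where
  "passes_test n p1 p2 \<omega> j \<longleftrightarrow>
     2 * card {t. t < num_queries n p1 p2 j \<and> \<omega> (j, t)} > num_queries n p1 p2 j"

definition passes_all :: "nat \<Rightarrow> real \<Rightarrow> real \<Rightarrow> (nat \<times> nat \<Rightarrow> bool) \<Rightarrow> bool" where
  "passes_all n p1 p2 \<omega> \<longleftrightarrow> (\<forall>j \<le> eta n. passes_test n p1 p2 \<omega> j)"

end

theory Submission imports Defs begin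

lemma test_fail:
  fixes Q B :: "'b set" and P :: "'b \<Rightarrow> bool pmf" and a :: real and N :: nat
  assumes fin: "finite Q" and sub: "B \<subseteq> Q" and cardB: "card B = N" and N: "N > 0"
    and P: "\<And>x. x \<in> B \<Longrightarrow> P x = bernoulli_pmf a" and a: "a \<le> 1" "a \<ge> 1/2"
  shows "measure_pmf.prob (Pi_pmf Q False P) {\<omega>. 2 * card {x\<in>B. \<omega> x} \<le> N}
          \<le> exp (-2 * N * (a - 1/2)^2)"
proof -
  have finB: "finite B" using fin sub finite_subset by blast
  have "binomial_pmf N a = map_pmf (\<lambda>f. card {x\<in>B. f x}) (Pi_pmf B False (\<lambda>_. bernoulli_pmf a))"
    using binomial_pmf_altdef'[OF finB cardB, of a False] a by simp
  also have "Pi_pmf B False (\<lambda>_. bernoulli_pmf a) = Pi_pmf B False P"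
    by (rule Pi_pmf_cong) (auto simp: P)
  also have "\<dots> = map_pmf (\<lambda>f x. if x \<in> B then f x else False) (Pi_pmf Q False P)"
    by (rule Pi_pmf_subset[OF fin sub])
  also have "map_pmf (\<lambda>f. card {x\<in>B. f x}) \<dots> = map_pmf (\<lambda>f. card {x\<in>B. f x}) (Pi_pmf Q False P)"
    by (simp add: map_pmf_comp o_def cong: conj_cong)
  finally have eq: "binomial_pmf N a = map_pmf (\<lambda>f. card {x\<in>B. f x}) (Pi_pmf Q False P)" .
  have "measure_pmf.prob (Pi_pmf Q False P) {\<omega>. 2 * card {x\<in>B. \<omega> x} \<le> N}
      = measure_pmf.prob (binomial_pmf N a) {k. 2 * k \<le> N}"
    unfolding eq measure_map_pmf by (simp add: vimage_def)
  also have "\<dots> \<le> measure_pmf.prob (binomial_pmf N a) {k. real k \<le> real N * a - N * (a - 1/2)}"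
  proof (rule measure_pmf.finite_measure_mono)
    show "{k. 2 * k \<le> N} \<subseteq> {k. real k \<le> real N * a - N * (a - 1/2)}"
      by (auto simp: algebra_simps)
  qed auto
  also have "\<dots> \<le> exp (- 2 * (N * (a - 1/2))\<^sup>2 / real N)"
    by (rule binomial_distribution.prob_le) (use a N in \<open>auto simp: binomial_distribution_def\<close>)
  also have "- 2 * (N * (a - 1/2))\<^sup>2 / real N = -2 * N * (a - 1/2)^2"
    using N by (simp add: power2_eq_square field_simps)
  finally show ?thesis .
qed

lemma cq_bound:
  assumes "0 \<le> q" "q < 1/2"
  shows "real (cq q) * (1/2 - q)^2 \<ge> 1/2"
proof -
  have d: "(1 - 2*q)^2 = 4 * (1/2 - q)^2" by (simp add: power2_eq_square algebra_simps)
  have pos: "(1 - 2*q)^2 > 0" using assms by simp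
  have "real (cq q) \<ge> 4 * (1 - q) / (1 - 2 * q)^2"
    unfolding cq_def by linarith
  hence h: "4 * (1 - q) \<le> real (cq q) * (1 - 2 * q)^2"
    using pos by (simp add: divide_le_eq)
  hence "4 * (1 - q) \<le> 4 * (real (cq q) * (1/2 - q)^2)" unfolding d by simp
  moreover have "\<forall>X::real. 4 * (1 - q) \<le> 4 * X \<longrightarrow> 1/2 \<le> X" using assms by auto
  ultimately show ?thesis by blast
qed

lemma N_bound:
  assumes "n \<ge> 1"
  shows "real (num_queries n p1 p2 j) \<ge> 4 * real (cq (if j = 0 then p1 else p2)) * ln (real n)"
proof -
  have ln0: "ln (real n) \<ge> 0" using assms by simp
  show ?thesis
  proof (cases "j = 0")
    case True
    have "real (nat \<lceil>ln (real n)\<rceil>) \<ge> ln (real n)" by linarith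
    hence "real (cq p1) * ln (real n) \<le> real (cq p1) * real (nat \<lceil>ln (real n)\<rceil>)"
      by (intro mult_left_mono) auto
    moreover have "0 \<le> real (cq p1) * ln (real n)" using ln0 by simp
    ultimately have "8 * real (cq p1) * real (nat \<lceil>ln (real n)\<rceil>) \<ge> 4 * real (cq p1) * ln (real n)"
      by (simp add: mult.assoc)
    moreover have "real (num_queries n p1 p2 j) = 8 * real (cq p1) * real (nat \<lceil>ln (real n)\<rceil>) + 1"
      using True by (simp add: num_queries_def)
    ultimately show ?thesis using True by simp
  next
    case False
    have "(2::real) ^ j \<ge> 2 ^ 1" using False by (intro power_increasing) auto
    hence "(2::real) ^ j \<ge> 2" by simp
    hence "2 ^ j * ln (real n) \<ge> 2 * ln (real n)" using ln0 by (simp add: mult_right_mono)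
    hence "real (nat \<lceil>2 ^ j * ln (real n)\<rceil>) \<ge> 2 * ln (real n)" by linarith
    hence "2 * ln (real n) * real (cq p2) \<le> real (nat \<lceil>2 ^ j * ln (real n)\<rceil>) * real (cq p2)"
      by (intro mult_right_mono) auto
    hence "2 * real (nat \<lceil>2 ^ j * ln (real n)\<rceil>) * real (cq p2) \<ge> 4 * real (cq p2) * ln (real n)"
      by (simp add: algebra_simps)
    moreover have "real (num_queries n p1 p2 j) = 2 * real (nat \<lceil>2 ^ j * ln (real n)\<rceil>) * real (cq p2) + 1"
      using False by (simp add: num_queries_def)
    ultimately show ?thesis using False by (simp add: algebra_simps)
  qed
qed


lemma eta_le: assumes "n \<ge> 2" shows "eta n \<le> n + 1"
proof -
  have l1: "log 2 (real n) \<ge> 1" using assms by (simp add: le_log_iff)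
  have pos: "real n / log 2 (real n) > 0" using assms l1 by simp
  have "real n / log 2 (real n) \<le> real n" using l1 assms by (simp add: divide_le_eq)
  hence "log 2 (real n / log 2 (real n)) \<le> log 2 (real n)" using pos by simp
  also have "log 2 (real n) < real n" using assms by (intro log2_of_power_less less_exp) auto
  finally have "\<lceil>log 2 (real n / log 2 (real n))\<rceil> \<le> int n" by linarith
  thus ?thesis unfolding eta_def by linarith
qed

theorem lemma14:
  fixes n :: nat and S' :: "'a::linorder set" and x :: 'a
    and p1 p2 :: real and r1 r2 :: "'a \<Rightarrow> real"
  assumes n: "n \<ge> 2"
    and m_int: "real n / log 2 (real n) = real (card S')"
    and fin: "finite S'"
    and p1: "0 \<le> p1" "p1 < 1/2" and p2: "0 \<le> p2" "p2 < 1/2"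
    and r_range: "\<And>y. y \<in> S' \<Longrightarrow> 0 \<le> r1 y \<and> r1 y \<le> 1 \<and> 0 \<le> r2 y \<and> r2 y \<le> 1"
    and O1_low: "\<And>y. y \<in> S_minus (1/6) S' \<Longrightarrow> r1 y \<ge> 1 - p1"
    and O1_high: "\<And>y. y \<in> S' - S_minus (1/3) S' \<Longrightarrow> r1 y \<le> p1"
    and O2_low: "\<And>y. y \<in> S_minus (1/3) S' \<Longrightarrow> r2 y \<ge> 1 - p2"
    and O2_high: "\<And>y. y \<in> S' - S_minus (3/4) S' \<Longrightarrow> r2 y \<le> p2"
    and x: "x \<in> S_minus (1/6) S'"
  shows "measure_pmf.prob (answers n p1 p2 (r1 x) (r2 x)) {\<omega>. passes_all n p1 p2 \<omega>}
           \<ge> 1 - 5 / (real n)^2"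
proof -
  have xS: "x \<in> S'" using x by (simp add: S_minus_def)
  have "\<lceil>1/6 * real (card S')\<rceil> \<le> \<lceil>1/3 * real (card S')\<rceil>"
    by (intro ceiling_mono) auto
  hence x3: "x \<in> S_minus (1/3) S'" using x by (auto simp: S_minus_def)
  have a1: "1 - p1 \<le> r1 x" "r1 x \<le> 1" using O1_low[OF x] r_range[OF xS] by auto
  have a2: "1 - p2 \<le> r2 x" "r2 x \<le> 1" using O2_low[OF x3] r_range[OF xS] by auto
  define M where "M = answers n p1 p2 (r1 x) (r2 x)"
  define Q where "Q = query_set n p1 p2"
  have Qeq: "Q = (SIGMA j:{..eta n}. {..<num_queries n p1 p2 j})"
    by (auto simp: Q_def query_set_def)
  have finQ: "finite Q" unfolding Qeq by auto
  have nr: "real n \<ge> 2" using n by simp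
  have lnpos: "ln (real n) \<ge> 0" using nr by simp
  have fail: "measure_pmf.prob M {\<omega>. \<not> passes_test n p1 p2 \<omega> j} \<le> 1 / real n ^ 4"
    if j: "j \<le> eta n" for j
  proof -
    define N where "N = num_queries n p1 p2 j"
    define a where "a = (if j = 0 then r1 x else r2 x)"
    define q where "q = (if j = 0 then p1 else p2)"
    define B where "B = Pair j ` {..<N}"
    have cardB: "card B = N" unfolding B_def by (simp add: card_image inj_on_def)
    have N0: "N > 0" unfolding N_def num_queries_def by simp
    have sub: "B \<subseteq> Q" unfolding B_def Qeq N_def using j by auto
    have q: "0 \<le> q" "q < 1/2" unfolding q_def using p1 p2 by auto
    have a: "1 - q \<le> a" "a \<le> 1" unfolding a_def q_def using a1 a2 by auto
    have seteq: "{\<omega>. \<not> passes_test n p1 p2 \<omega> j} = {\<omega>. 2 * card {y\<in>B. \<omega> y} \<le> N}"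
    proof -
      have "card {y\<in>B. \<omega> y} = card {t. t < N \<and> \<omega> (j, t)}" for \<omega>
      proof -
        have "{y\<in>B. \<omega> y} = Pair j ` {t. t < N \<and> \<omega> (j, t)}" unfolding B_def by auto
        thus ?thesis by (simp add: card_image inj_on_def)
      qed
      thus ?thesis unfolding passes_test_def N_def by (auto simp: not_less)
    qed
    have "measure_pmf.prob M {\<omega>. \<not> passes_test n p1 p2 \<omega> j}
        \<le> exp (-2 * N * (a - 1/2)^2)"
      unfolding seteq M_def answers_def Q_def[symmetric]
      by (rule test_fail[OF finQ sub cardB N0]) (use a q in \<open>auto simp: B_def a_def\<close>)
    also have "\<dots> \<le> exp (- (4 * ln (real n)))"
    proof -
      have "(1/2 - q)^2 \<le> (a - 1/2)^2" using a q by (intro power_mono) auto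
      have c: "real (cq q) * (1/2 - q)^2 \<ge> 1/2" by (rule cq_bound[OF q])
      have Nb: "real N \<ge> 4 * real (cq q) * ln (real n)"
        unfolding N_def q_def by (rule N_bound) (use n in simp)
      have "real N * (1/2 - q)^2 \<ge> 4 * real (cq q) * ln (real n) * (1/2 - q)^2"
        using Nb by (intro mult_right_mono) auto
      also have "4 * real (cq q) * ln (real n) * (1/2 - q)^2 = 4 * ln (real n) * (real (cq q) * (1/2 - q)^2)"
        by (simp add: algebra_simps)
      also have "\<dots> \<ge> 4 * ln (real n) * (1/2)"
        using c lnpos by (intro mult_left_mono) auto
      finally have "real N * (1/2 - q)^2 \<ge> 2 * ln (real n)" by simp
      moreover have "real N * (1/2 - q)^2 \<le> real N * (a - 1/2)^2"
        using \<open>(1/2 - q)^2 \<le> (a - 1/2)^2\<close> by (intro mult_left_mono) auto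
      ultimately show ?thesis by simp
    qed
    also have "\<dots> = 1 / real n ^ 4"
    proof -
      have "4 * ln (real n) = ln (real n ^ 4)" using nr by (simp add: ln_realpow)
      thus ?thesis using nr by (simp add: exp_minus inverse_eq_divide)
    qed
    finally show ?thesis .
  qed
  have un: "{\<omega>. \<not> passes_all n p1 p2 \<omega>} = (\<Union>j\<in>{..eta n}. {\<omega>. \<not> passes_test n p1 p2 \<omega> j})"
    by (auto simp: passes_all_def)
  have "measure_pmf.prob M {\<omega>. \<not> passes_all n p1 p2 \<omega>}
      \<le> (\<Sum>j\<in>{..eta n}. measure_pmf.prob M {\<omega>. \<not> passes_test n p1 p2 \<omega> j})"
    unfolding un by (rule measure_pmf.finite_measure_subadditive_finite) auto
  also have "\<dots> \<le> (\<Sum>j\<in>{..eta n}. 1 / real n ^ 4)"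
    by (intro sum_mono fail) auto
  also have "\<dots> = real (eta n + 1) / real n ^ 4" by simp
  also have "\<dots> \<le> 5 / real n ^ 2"
  proof -
    have "real (eta n + 1) \<le> real n + 2" using eta_le[OF n] by simp
    also have "real n + 2 \<le> 5 * real n ^ 2"
    proof -
      have "2 * real n \<le> real n * real n" using nr by (intro mult_right_mono) auto
      thus ?thesis using nr unfolding power2_eq_square by linarith
    qed
    finally have "real (eta n + 1) \<le> 5 * real n ^ 2" .
    moreover have "5 * real n ^ 2 = 5 / real n ^ 2 * real n ^ 4"
      using nr by (simp add: power2_eq_square power4_eq_xxxx)
    ultimately have "real (eta n + 1) \<le> 5 / real n ^ 2 * real n ^ 4" by simp
    thus ?thesis using nr by (simp add: divide_le_eq)
  qed
  finally have F: "measure_pmf.prob M {\<omega>. \<not> passes_all n p1 p2 \<omega>} \<le> 5 / real n ^ 2" .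
  have "measure_pmf.prob M {\<omega>. passes_all n p1 p2 \<omega>} = 1 - measure_pmf.prob M {\<omega>. \<not> passes_all n p1 p2 \<omega>}"
  proof -
    have "{\<omega>. passes_all n p1 p2 \<omega>} = space (measure_pmf M) - {\<omega>. \<not> passes_all n p1 p2 \<omega>}" by auto
    thus ?thesis using measure_pmf.prob_compl[of "{\<omega>. \<not> passes_all n p1 p2 \<omega>}" M] by simp
  qed
  thus ?thesis using F unfolding M_def by simp
qed

end
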